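(* Let $T$ be a tree with colour classes $A$ and $B$ such that $|A|\le |B|$ and $\delta(A)=\min\{d_T(x):x\in A\}\ge 2$. Then: (i) $\beta(T)=|A|$; (ii) $\min\{\beta(T'):T'\in\mathcal{H}(T)\}\ge |A|$; (iii) for every $m\ge 1$, the graph $K_{|A|-1}\vee K_m^c$ contains no member of $\mathcal{H}(T)$ as a subgraph.
   Context: $\beta(G)$ is the (vertex) covering number of $G$. $K_m^c$ is the empty graph on $m$ vertices and $\vee$ denotes the join. A vertex split on a vertex $v$ of $H$ replaces $v$ by an independent set of $d(v)$ new vertices, each adjacent to exactly one vertex of $N_H(v)$, distinct new vertices adjacent to distinct neighbours; a vertex split on $U\subseteq V(H)$ applies this to the vertices of $U$ one by one. The splitting family $\mathcal{H}(H)$ is the family of all graphs obtained from $H$ by a vertex split on some $U\subseteq V(H)$. *)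

theory Defs
  imports Main
begin

type_synonym 'a graph = "'a set \<times> 'a set set"

definition verts :: "'a graph \<Rightarrow> 'a set" where "verts G = fst G"
definition edges :: "'a graph \<Rightarrow> 'a set set" where "edges G = snd G"

definition simple_graph :: "'a graph \<Rightarrow> bool" where
  "simple_graph G \<longleftrightarrow> finite (verts G) \<and>
     (\<forall>e\<in>edges G. \<exists>x y. x \<in> verts G \<and> y \<in> verts G \<and> x \<noteq> y \<and> e = {x, y})"

definition adj :: "'a graph \<Rightarrow> 'a \<Rightarrow> 'a \<Rightarrow> bool" where
  "adj G x y \<longleftrightarrow> {x, y} \<in> edges G"

definition neighbours :: "'a graph \<Rightarrow> 'a \<Rightarrow> 'a set" where
  "neighbours G v = {u. adj G v u}"

definition degree :: "'a graph \<Rightarrow> 'a \<Rightarrow> nat" where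
  "degree G v = card (neighbours G v)"

definition connected :: "'a graph \<Rightarrow> bool" where
  "connected G \<longleftrightarrow> verts G \<noteq> {} \<and>
     (\<forall>x\<in>verts G. \<forall>y\<in>verts G. (x, y) \<in> {(u, w). adj G u w}\<^sup>*)"

definition is_cycle :: "'a graph \<Rightarrow> 'a list \<Rightarrow> bool" where
  "is_cycle G cs \<longleftrightarrow> length cs \<ge> 3 \<and> distinct cs \<and> set cs \<subseteq> verts G \<and>
     (\<forall>i < length cs - 1. adj G (cs ! i) (cs ! Suc i)) \<and> adj G (last cs) (hd cs)"

definition acyclic_graph :: "'a graph \<Rightarrow> bool" where
  "acyclic_graph G \<longleftrightarrow> \<not> (\<exists>cs. is_cycle G cs)"

definition tree :: "'a graph \<Rightarrow> bool" where
  "tree G \<longleftrightarrow> simple_graph G \<and> connected G \<and> acyclic_graph G"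

definition colour_classes :: "'a graph \<Rightarrow> 'a set \<Rightarrow> 'a set \<Rightarrow> bool" where
  "colour_classes G A B \<longleftrightarrow> A \<union> B = verts G \<and> A \<inter> B = {} \<and>
     (\<forall>e\<in>edges G. card (e \<inter> A) = 1 \<and> card (e \<inter> B) = 1)"

definition is_vertex_cover :: "'a graph \<Rightarrow> 'a set \<Rightarrow> bool" where
  "is_vertex_cover G S \<longleftrightarrow> S \<subseteq> verts G \<and> (\<forall>e\<in>edges G. e \<inter> S \<noteq> {})"

definition covering_number :: "'a graph \<Rightarrow> nat" where
  "covering_number G = Min {card S | S. is_vertex_cover G S}"

text \<open>Vertex split on a set U (result of splitting the vertices of U one by one,
  with concrete names for the vertices): an unsplit vertex v is named (v,v); the new
  vertex created when splitting v that is attached to (the image of) neighbour u is named (v,u).\<close>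
definition split_end :: "'a set \<Rightarrow> 'a \<Rightarrow> 'a \<Rightarrow> 'a \<times> 'a" where
  "split_end U x y = (if x \<in> U then (x, y) else (x, x))"

definition vertex_split :: "'a set \<Rightarrow> 'a graph \<Rightarrow> ('a \<times> 'a) graph" where
  "vertex_split U G =
     ({(v, v) | v. v \<in> verts G - U} \<union> {(v, u) | v u. v \<in> U \<and> adj G v u},
      {{split_end U x y, split_end U y x} | x y. {x, y} \<in> edges G})"

definition splitting_family :: "'a graph \<Rightarrow> ('a \<times> 'a) graph set" where
  "splitting_family H = {vertex_split U H | U. U \<subseteq> verts H}"

definition complete_graph :: "nat \<Rightarrow> nat graph" where
  "complete_graph n = ({0..<n}, {{i, j} | i j. i < n \<and> j < n \<and> i \<noteq> j})"

definition empty_graph :: "nat \<Rightarrow> nat graph" where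
  "empty_graph m = ({0..<m}, {})"

definition graph_join :: "'a graph \<Rightarrow> 'b graph \<Rightarrow> ('a + 'b) graph" where
  "graph_join G H =
     (Inl ` verts G \<union> Inr ` verts H,
      (\<lambda>e. Inl ` e) ` edges G \<union> (\<lambda>e. Inr ` e) ` edges H \<union>
      {{Inl x, Inr y} | x y. x \<in> verts G \<and> y \<in> verts H})"

definition contains_subgraph :: "'b graph \<Rightarrow> 'a graph \<Rightarrow> bool" where
  "contains_subgraph G H \<longleftrightarrow> (\<exists>f. inj_on f (verts H) \<and> f ` verts H \<subseteq> verts G \<and>
     (\<forall>e\<in>edges H. f ` e \<in> edges G))"

end

theory Submission
  imports Defs
begin

definition gpath :: "'a graph \<Rightarrow> 'a list \<Rightarrow> bool" where
  "gpath G p \<longleftrightarrow> distinct p \<and> set p \<subseteq> verts G \<and> (\<forall>i < length p - 1. adj G (p!i) (p!Suc i))"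

lemma adj_sym: "adj G x y \<Longrightarrow> adj G y x"
  unfolding adj_def by (simp add: insert_commute)

lemma cycle_exists:
  assumes fin: "finite (verts G)" and ne: "verts G \<noteq> {}"
    and deg: "\<forall>v\<in>verts G. \<exists>u1 u2. u1 \<noteq> u2 \<and> adj G v u1 \<and> adj G v u2"
    and noloop: "\<forall>v. \<not> adj G v v"
    and closed: "\<forall>x y. adj G x y \<longrightarrow> y \<in> verts G"
  shows "\<exists>cs. is_cycle G cs"
proof -
  obtain v where v: "v \<in> verts G" using ne by blast
  have p1: "gpath G [v]" using v by (simp add: gpath_def)
  have bnd: "\<forall>n. (\<exists>p. gpath G p \<and> length p = n) \<longrightarrow> n \<le> card (verts G)"
  proof (intro allI impI)
    fix n assume "\<exists>p. gpath G p \<and> length p = n"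
    then obtain p where "gpath G p" "length p = n" by blast
    then show "n \<le> card (verts G)"
      by (metis card_mono distinct_card fin gpath_def)
  qed
  have P1: "\<exists>p. gpath G p \<and> length p = 1" using p1 by (intro exI[of _ "[v]"]) simp
  obtain n where n: "\<exists>p. gpath G p \<and> length p = n"
    and nmax: "\<forall>m. (\<exists>p. gpath G p \<and> length p = m) \<longrightarrow> m \<le> n"
    using Nat.ex_has_greatest_nat[of "\<lambda>n. \<exists>p. gpath G p \<and> length p = n" 1 "card (verts G)", OF P1 bnd]
    by blast
  obtain p where p: "gpath G p" "length p = n" using n by blast
  have "n \<ge> 1" using nmax p1 by fastforce
  then have pne: "p \<noteq> []" using p by auto
  define h where "h = p ! 0"
  have h: "h \<in> verts G" using p pne unfolding gpath_def h_def by auto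
  have inp: "u \<in> set p" if "adj G h u" for u
  proof (rule ccontr)
    assume nu: "u \<notin> set p"
    have "gpath G (u # p)"
      unfolding gpath_def
    proof (intro conjI allI impI)
      show "distinct (u # p)" using nu p(1) by (simp add: gpath_def)
      show "set (u # p) \<subseteq> verts G" using p(1) closed that by (auto simp: gpath_def)
      fix i assume i: "i < length (u # p) - 1"
      show "adj G ((u # p) ! i) ((u # p) ! Suc i)"
      proof (cases i)
        case 0
        then show ?thesis using adj_sym[OF that] h_def by simp
      next
        case (Suc j)
        then show ?thesis using i p(1) by (auto simp: gpath_def)
      qed
    qed
    then show False using nmax p by fastforce
  qed
  obtain u1 u2 where u: "u1 \<noteq> u2" "adj G h u1" "adj G h u2" using deg h by blast
  obtain i1 where i1: "i1 < length p" "p ! i1 = u1" using inp[OF u(2)] by (metis in_set_conv_nth)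
  obtain i2 where i2: "i2 < length p" "p ! i2 = u2" using inp[OF u(3)] by (metis in_set_conv_nth)
  have "i1 \<noteq> 0" proof assume "i1 = 0" then show False using i1 u(2) noloop h_def by simp qed
  moreover have "i2 \<noteq> 0" proof assume "i2 = 0" then show False using i2 u(3) noloop h_def by simp qed
  moreover have "i1 \<noteq> i2" using i1 i2 u(1) by auto
  ultimately obtain i where i: "i \<ge> 2" "i < length p" "adj G h (p ! i)"
    using i1 i2 u by (metis One_nat_def Suc_1 Suc_leI le_neq_implies_less less_one not_less)
  define cs where "cs = take (Suc i) p"
  have "is_cycle G cs"
    unfolding is_cycle_def
  proof (intro conjI allI impI)
    show "3 \<le> length cs" using i by (simp add: cs_def)
    show "distinct cs" using p(1) by (simp add: cs_def gpath_def)
    show "set cs \<subseteq> verts G" using p(1) unfolding cs_def gpath_def by (meson set_take_subset subset_trans)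
    fix j assume j: "j < length cs - 1"
    then show "adj G (cs ! j) (cs ! Suc j)" using p(1) i unfolding cs_def gpath_def by auto
  next
    have "last cs = p ! i" using i unfolding cs_def by (simp add: take_Suc_conv_app_nth)
    moreover have "hd cs = h" using pne unfolding cs_def h_def by (simp add: hd_conv_nth)
    ultimately show "adj G (last cs) (hd cs)" using adj_sym[OF i(3)] by simp
  qed
  then show ?thesis by blast
qed

lemma cycle_mono:
  assumes "is_cycle (V, E) cs" "V \<subseteq> V'" "E \<subseteq> E'"
  shows "is_cycle (V', E') cs"
  using assms unfolding is_cycle_def adj_def verts_def edges_def by auto

lemma forest_bound_n:
  "card V = n \<Longrightarrow> finite V \<Longrightarrow> V \<noteq> {} \<Longrightarrow>
   (\<forall>e\<in>E. \<exists>x y. x \<in> V \<and> y \<in> V \<and> x \<noteq> y \<and> e = {x, y}) \<Longrightarrow>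
   \<not> (\<exists>cs. is_cycle (V, E) cs) \<Longrightarrow> card E < card V"
proof (induction n arbitrary: V E rule: less_induct)
  case (less n)
  have finE: "finite E"
  proof (rule finite_subset)
    show "E \<subseteq> Pow V" using less.prems(4) by auto
  qed (use less.prems(2) in simp)
  show ?case
  proof (cases "\<exists>v\<in>V. \<forall>u1 u2. {v, u1} \<in> E \<and> {v, u2} \<in> E \<longrightarrow> u1 = u2")
    case True
    then obtain v where v: "v \<in> V" and uniq: "\<forall>u1 u2. {v, u1} \<in> E \<and> {v, u2} \<in> E \<longrightarrow> u1 = u2"
      by blast
    define V' where "V' = V - {v}"
    define E' where "E' = {e\<in>E. v \<notin> e}"
    show ?thesis
    proof (cases "V' = {}")
      case True
      then have "V = {v}" using v unfolding V'_def by auto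
      then have "E = {}" using less.prems(4) by auto
      then show ?thesis using v less.prems(2) by (auto simp: card_gt_0_iff)
    next
      case False
      have cV': "card V' < n" using card_Diff1_less[OF less.prems(2) v] less.prems(1) V'_def by simp
      have wf': "\<forall>e\<in>E'. \<exists>x y. x \<in> V' \<and> y \<in> V' \<and> x \<noteq> y \<and> e = {x, y}"
      proof
        fix e assume e: "e \<in> E'"
        then obtain x y where xy: "x \<in> V" "y \<in> V" "x \<noteq> y" "e = {x, y}" "v \<notin> e"
          using less.prems(4) unfolding E'_def by blast
        then have "x \<in> V'" "y \<in> V'" unfolding V'_def by auto
        then show "\<exists>x y. x \<in> V' \<and> y \<in> V' \<and> x \<noteq> y \<and> e = {x, y}" using xy by blast
      qed
      have ac': "\<not> (\<exists>cs. is_cycle (V', E') cs)"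
        using less.prems(5) cycle_mono[of V' E' _ V E] unfolding V'_def E'_def by blast
      have IH: "card E' < card V'"
        using less.IH[OF cV' refl _ False wf' ac'] less.prems(2) V'_def by simp
      have sub: "E - E' \<subseteq> {e}" if "e \<in> E - E'" for e
      proof -
        have "e \<in> E" using that by simp
        then have "\<exists>x y. x \<in> V \<and> y \<in> V \<and> x \<noteq> y \<and> e = {x, y}" using less.prems(4) by (rule bspec[rotated])
        then obtain x y where xy: "x \<noteq> y" "e = {x, y}" by blast
        have "v \<in> e" using that unfolding E'_def by auto
        then obtain u where u: "e = {v, u}" using xy by auto
        show ?thesis
        proof
          fix e' assume e': "e' \<in> E - E'"
          obtain x' y' where "e' = {x', y'}" using less.prems(4) e' by blast
          moreover have "v \<in> e'" using e' unfolding E'_def by auto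
          ultimately obtain u' where u': "e' = {v, u'}" by auto
          have "u = u'" using uniq u u' that e' by auto
          then show "e' \<in> {e}" using u u' by simp
        qed
      qed
      have "card (E - E') \<le> 1"
      proof (cases "E - E' = {}")
        case False
        then obtain e where "e \<in> E - E'" by blast
        then show ?thesis using sub[of e] card_mono[of "{e}" "E - E'"] by simp
      next
        case True
        show ?thesis unfolding True by simp
      qed
      moreover have "card E = card E' + card (E - E')"
      proof -
        have "E = E' \<union> (E - E')" by (auto simp: E'_def)
        moreover have "finite E'" "finite (E - E')" using finE by (auto simp: E'_def)
        ultimately show ?thesis using card_Un_disjoint[of E' "E - E'"] by auto
      qed
      moreover have "card V = Suc (card V')" using card.remove[OF less.prems(2) v] V'_def by simp
      ultimately show ?thesis using IH by linarith
    qed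
  next
    case False
    then have deg: "\<forall>v\<in>V. \<exists>u1 u2. u1 \<noteq> u2 \<and> adj (V, E) v u1 \<and> adj (V, E) v u2"
      unfolding adj_def edges_def snd_conv by blast
    have "\<exists>cs. is_cycle (V, E) cs"
    proof (rule cycle_exists)
      show "finite (verts (V, E))" "verts (V, E) \<noteq> {}" using less.prems by (auto simp: verts_def)
      show "\<forall>v\<in>verts (V, E). \<exists>u1 u2. u1 \<noteq> u2 \<and> adj (V, E) v u1 \<and> adj (V, E) v u2"
        using deg by (simp add: verts_def)
      show "\<forall>v. \<not> adj (V, E) v v"
      proof (intro allI notI)
        fix v assume "adj (V, E) v v"
        then have "{v} \<in> E" by (simp add: adj_def edges_def)
        then obtain x y where "x \<noteq> y" "{v} = {x, y}" using less.prems(4) by blast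
        then show False by (metis doubleton_eq_iff insert_absorb2)
      qed
      show "\<forall>x y. adj (V, E) x y \<longrightarrow> y \<in> verts (V, E)"
      proof (intro allI impI)
        fix x y assume "adj (V, E) x y"
        then have "{x, y} \<in> E" by (simp add: adj_def edges_def)
        then obtain a b where "a \<in> V" "b \<in> V" "{x, y} = {a, b}" using less.prems(4) by blast
        then show "y \<in> verts (V, E)" by (auto simp: verts_def doubleton_eq_iff)
      qed
    qed
    then show ?thesis using less.prems(5) by blast
  qed
qed

lemma forest_bound:
  "finite V \<Longrightarrow> V \<noteq> {} \<Longrightarrow>
   (\<forall>e\<in>E. \<exists>x y. x \<in> V \<and> y \<in> V \<and> x \<noteq> y \<and> e = {x, y}) \<Longrightarrow>
   \<not> (\<exists>cs. is_cycle (V, E) cs) \<Longrightarrow> card E < card V"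
  using forest_bound_n by blast


lemma cov_le:
  assumes "finite (verts G)" "is_vertex_cover G S"
  shows "covering_number G \<le> card S"
proof -
  have "{card S | S. is_vertex_cover G S} \<subseteq> card ` Pow (verts G)"
    unfolding is_vertex_cover_def by auto
  then have "finite {card S | S. is_vertex_cover G S}"
    using assms(1) finite_subset by blast
  then show ?thesis unfolding covering_number_def using assms(2) by (intro Min_le) auto
qed

lemma cov_ge:
  assumes "finite (verts G)" "is_vertex_cover G S0"
    and "\<And>S. is_vertex_cover G S \<Longrightarrow> k \<le> card S"
  shows "k \<le> covering_number G"
proof -
  have "{card S | S. is_vertex_cover G S} \<subseteq> card ` Pow (verts G)"
    unfolding is_vertex_cover_def by auto
  then have fin: "finite {card S | S. is_vertex_cover G S}"
    using assms(1) finite_subset by blast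
  have "covering_number G \<in> {card S | S. is_vertex_cover G S}"
    unfolding covering_number_def using assms(2) by (intro Min_in[OF fin]) auto
  then show ?thesis using assms(3) by auto
qed

lemma simple_adj:
  assumes "simple_graph T" "adj T x y"
  shows "x \<in> verts T" "y \<in> verts T" "x \<noteq> y"
  using assms unfolding simple_graph_def adj_def by (metis doubleton_eq_iff)+

lemma simple_edge:
  assumes "simple_graph T" "e \<in> edges T"
  shows "\<exists>x y. x \<in> verts T \<and> y \<in> verts T \<and> x \<noteq> y \<and> e = {x, y}"
proof -
  have "\<forall>e\<in>edges T. \<exists>x y. x \<in> verts T \<and> y \<in> verts T \<and> x \<noteq> y \<and> e = {x, y}"
    using assms(1) unfolding simple_graph_def by (rule conjunct2)
  then show ?thesis using assms(2) by (rule bspec)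
qed

lemma adj_AB:
  assumes "simple_graph T" "colour_classes T A B" "adj T a u" "a \<in> A"
  shows "u \<notin> A" "u \<in> B"
proof -
  have e: "{a, u} \<in> edges T" using assms(3) unfolding adj_def by metis
  have ne: "a \<noteq> u" using simple_adj[OF assms(1,3)] by simp
  have c: "card ({a, u} \<inter> A) = 1" using assms(2) e unfolding colour_classes_def by blast
  show ua: "u \<notin> A"
  proof
    assume "u \<in> A"
    then have "{a, u} \<inter> A = {a, u}" using assms(4) by auto
    then show False using c ne by simp
  qed
  have "u \<in> verts T" using simple_adj[OF assms(1,3)] by simp
  then show "u \<in> B" using assms(2) ua unfolding colour_classes_def by auto
qed

lemma nbr_bound:
  assumes tr: "tree T" and cc: "colour_classes T A B" and deg: "\<forall>x\<in>A. degree T x \<ge> 2"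
    and A': "A' \<subseteq> A" "A' \<noteq> {}"
  shows "card A' < card {u. \<exists>a\<in>A'. adj T a u}"
proof -
  define N where "N = {u. \<exists>a\<in>A'. adj T a u}"
  have sg: "simple_graph T" using tr unfolding tree_def by blast
  have finV: "finite (verts T)" using sg unfolding simple_graph_def by blast
  have AV: "A \<subseteq> verts T" using cc unfolding colour_classes_def by blast
  have finA': "finite A'" using finite_subset[OF subset_trans[OF A'(1) AV] finV] .
  have NV: "N \<subseteq> verts T" using simple_adj[OF sg] N_def by blast
  have finN: "finite N" using finite_subset[OF NV finV] .
  have NA: "N \<inter> A = {}" using adj_AB[OF sg cc] A' N_def by blast
  define V' where "V' = A' \<union> N"
  define E' where "E' = {e\<in>edges T. e \<inter> A' \<noteq> {}}"
  have wf: "\<forall>e\<in>E'. \<exists>x y. x \<in> V' \<and> y \<in> V' \<and> x \<noteq> y \<and> e = {x, y}"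
  proof
    fix e assume e: "e \<in> E'"
    then have eT: "e \<in> edges T" unfolding E'_def by simp
    obtain x y where xy0: "x \<noteq> y" "e = {x, y}" using simple_edge[OF sg eT] by blast
    then have xy: "x \<noteq> y" "e = {x, y}" "{x, y} \<in> edges T" using eT by auto
    have "x \<in> A' \<or> y \<in> A'" using e xy unfolding E'_def by auto
    moreover have "adj T x y" "adj T y x" using xy unfolding adj_def by (metis insert_commute)+
    ultimately have "x \<in> V' \<and> y \<in> V'" unfolding V'_def N_def by blast
    then show "\<exists>x y. x \<in> V' \<and> y \<in> V' \<and> x \<noteq> y \<and> e = {x, y}" using xy by blast
  qed
  have ac: "\<not> (\<exists>cs. is_cycle (V', E') cs)"
  proof
    assume "\<exists>cs. is_cycle (V', E') cs"
    then obtain cs where "is_cycle (V', E') cs" by blast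
    moreover have "V' \<subseteq> verts T" using A' AV NV unfolding V'_def by blast
    moreover have "E' \<subseteq> edges T" unfolding E'_def by blast
    ultimately have "is_cycle (verts T, edges T) cs" using cycle_mono by blast
    moreover have "(verts T, edges T) = T" by (simp add: verts_def edges_def)
    ultimately show False using tr unfolding tree_def acyclic_graph_def by metis
  qed
  have finV': "finite V'" "V' \<noteq> {}" using finA' finN A' unfolding V'_def by auto
  have lt: "card E' < card V'" using forest_bound[OF finV' wf ac] .
  have cV': "card V' = card A' + card N"
    unfolding V'_def using finA' finN NA A' by (intro card_Un_disjoint) auto
  have finE': "finite E'"
  proof (rule finite_subset)
    show "E' \<subseteq> Pow V'" using wf by auto
  qed (use finV' in simp)
  define S where "S = Sigma A' (neighbours T)"
  have inj: "inj_on (\<lambda>(a, u). {a, u}) S"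
  proof (rule inj_onI)
    fix p q assume p: "p \<in> S" and q: "q \<in> S" and eq: "(\<lambda>(a, u). {a, u}) p = (\<lambda>(a, u). {a, u}) q"
    obtain a u where pa: "p = (a, u)" "a \<in> A'" "adj T a u" using p unfolding S_def neighbours_def by auto
    obtain b w where qb: "q = (b, w)" "b \<in> A'" "adj T b w" using q unfolding S_def neighbours_def by auto
    have "u \<notin> A" "w \<notin> A" using adj_AB[OF sg cc] pa qb A' by blast+
    moreover have "{a, u} = {b, w}" using eq pa qb by simp
    ultimately show "p = q" using pa qb A' by (metis doubleton_eq_iff subsetD)
  qed
  have img: "(\<lambda>(a, u). {a, u}) ` S \<subseteq> E'"
    unfolding S_def E'_def neighbours_def adj_def by auto
  have finnb: "\<forall>a\<in>A'. finite (neighbours T a)"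
    using finV simple_adj[OF sg] unfolding neighbours_def by (metis finite_subset mem_Collect_eq subsetI)
  have "card S = (\<Sum>a\<in>A'. degree T a)"
    unfolding S_def degree_def using finA' finnb by simp
  also have "\<dots> \<ge> (\<Sum>a\<in>A'. 2)" using deg A' by (intro sum_mono) auto
  finally have "2 * card A' \<le> card S" by simp
  also have "card S = card ((\<lambda>(a, u). {a, u}) ` S)" using inj card_image by metis
  also have "\<dots> \<le> card E'" using img finE' card_mono by metis
  finally show ?thesis using lt cV' unfolding N_def by linarith
qed


lemma cov_tree:
  assumes tr: "tree T" and cc: "colour_classes T A B" and deg: "\<forall>x\<in>A. degree T x \<ge> 2"
  shows "covering_number T = card A"
proof -
  have sg: "simple_graph T" using tr unfolding tree_def by blast
  have finV: "finite (verts T)" using sg unfolding simple_graph_def by blast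
  have AV: "A \<subseteq> verts T" using cc unfolding colour_classes_def by blast
  have covA: "is_vertex_cover T A"
    unfolding is_vertex_cover_def using AV cc unfolding colour_classes_def
    by (metis card.empty zero_neq_one)
  have "card A \<le> card S" if S: "is_vertex_cover T S" for S
  proof -
    have SV: "S \<subseteq> verts T" using S unfolding is_vertex_cover_def by blast
    have finS: "finite S" using finite_subset[OF SV finV] .
    show ?thesis
    proof (cases "A - S = {}")
      case True
      then show ?thesis using finS card_mono by (metis Diff_eq_empty_iff)
    next
      case False
      define N where "N = {u. \<exists>a\<in>A - S. adj T a u}"
      have lt: "card (A - S) < card N" using nbr_bound[OF tr cc deg _ False] N_def by blast
      have NS: "N \<subseteq> S"
      proof
        fix u assume "u \<in> N"
        then obtain a where a: "a \<in> A" "a \<notin> S" "adj T a u" unfolding N_def by blast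
        then have "{a, u} \<inter> S \<noteq> {}" using S unfolding is_vertex_cover_def adj_def by blast
        then show "u \<in> S" using a by auto
      qed
      have NA: "N \<inter> A = {}" using adj_AB[OF sg cc] N_def by blast
      have "card A \<le> card (A \<inter> S) + card (A - S)"
        by (metis Int_Diff_Un card_Un_le)
      also have "\<dots> \<le> card (A \<inter> S) + card N" using lt by simp
      also have "\<dots> = card ((A \<inter> S) \<union> N)"
        using finS NS NA by (intro card_Un_disjoint[symmetric]) (auto intro: finite_subset)
      also have "\<dots> \<le> card S" using NS finS by (intro card_mono) auto
      finally show ?thesis .
    qed
  qed
  then show ?thesis using cov_le[OF finV covA] cov_ge[OF finV covA] by (meson le_antisym)
qed

lemma split_props:
  assumes sg: "simple_graph T"
  shows "finite (verts (vertex_split U T))"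
    and "is_vertex_cover (vertex_split U T) (verts (vertex_split U T))"
    and "\<And>S'. is_vertex_cover (vertex_split U T) S' \<Longrightarrow> is_vertex_cover T (fst ` S')"
    and "\<forall>e\<in>edges (vertex_split U T). e \<subseteq> verts (vertex_split U T)"
proof -
  have finV: "finite (verts T)" using sg unfolding simple_graph_def by blast
  have VV: "verts (vertex_split U T) \<subseteq> verts T \<times> verts T"
    unfolding vertex_split_def verts_def using simple_adj[OF sg] by (auto simp: verts_def)
  then show "finite (verts (vertex_split U T))" using finV finite_subset by blast
  have se: "split_end U x y \<in> verts (vertex_split U T)" if "{x, y} \<in> edges T" for x y
  proof -
    have "x \<in> verts T" "adj T x y" using simple_adj[OF sg] that adj_def by metis+
    then show ?thesis unfolding split_end_def vertex_split_def by (auto simp: verts_def)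
  qed
  have se2: "split_end U y x \<in> verts (vertex_split U T)" if "{x, y} \<in> edges T" for x y
    using se[of y x] that by (simp add: insert_commute)
  show E: "\<forall>e\<in>edges (vertex_split U T). e \<subseteq> verts (vertex_split U T)"
    using se se2 unfolding vertex_split_def by (auto simp: edges_def)
  show "is_vertex_cover (vertex_split U T) (verts (vertex_split U T))"
    unfolding is_vertex_cover_def using E unfolding vertex_split_def by (auto simp: edges_def)
  fix S' assume S': "is_vertex_cover (vertex_split U T) S'"
  have "fst ` S' \<subseteq> verts T" using S' VV unfolding is_vertex_cover_def by auto
  moreover have "e \<inter> fst ` S' \<noteq> {}" if e: "e \<in> edges T" for e
  proof -
    obtain x y where xy: "e = {x, y}" using simple_edge[OF sg e] by blast
    have "{split_end U x y, split_end U y x} \<in> edges (vertex_split U T)"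
      using e xy unfolding vertex_split_def edges_def by auto
    then have "{split_end U x y, split_end U y x} \<inter> S' \<noteq> {}" using S' unfolding is_vertex_cover_def by blast
    moreover have "fst (split_end U x y) = x" "fst (split_end U y x) = y" by (simp_all add: split_end_def)
    ultimately show ?thesis using xy by force
  qed
  ultimately show "is_vertex_cover T (fst ` S')" unfolding is_vertex_cover_def by blast
qed

lemma split_cov:
  assumes tr: "tree T" and cc: "colour_classes T A B" and deg: "\<forall>x\<in>A. degree T x \<ge> 2"
  shows "card A \<le> covering_number (vertex_split U T)"
proof -
  have sg: "simple_graph T" using tr unfolding tree_def by blast
  have finV: "finite (verts T)" using sg unfolding simple_graph_def by blast
  show ?thesis
  proof (rule cov_ge[OF split_props(1,2)[OF sg]])
    fix S' assume S': "is_vertex_cover (vertex_split U T) S'"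
    have finS': "finite S'" using S' split_props(1)[OF sg, of U] is_vertex_cover_def finite_subset by metis
    have "card A = covering_number T" using cov_tree[OF tr cc deg] by simp
    also have "\<dots> \<le> card (fst ` S')" using cov_le[OF finV split_props(3)[OF sg S']] .
    also have "\<dots> \<le> card S'" using finS' card_image_le by blast
    finally show "card A \<le> card S'" .
  qed
qed


lemma no_embed:
  assumes tr: "tree T" and cc: "colour_classes T A B" and deg: "\<forall>x\<in>A. degree T x \<ge> 2"
    and Ane: "A \<noteq> {}"
  shows "\<not> contains_subgraph (graph_join (complete_graph (card A - 1)) (empty_graph m)) (vertex_split U T)"
proof
  define n where "n = card A - 1"
  define T' where "T' = vertex_split U T"
  define J where "J = graph_join (complete_graph n) (empty_graph m)"
  have sg: "simple_graph T" using tr unfolding tree_def by blast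
  have finV: "finite (verts T)" using sg unfolding simple_graph_def by blast
  have AV: "A \<subseteq> verts T" using cc unfolding colour_classes_def by blast
  have cA: "card A \<ge> 1" using Ane AV finV finite_subset by (metis One_nat_def Suc_leI card_gt_0_iff)
  assume "contains_subgraph (graph_join (complete_graph (card A - 1)) (empty_graph m)) (vertex_split U T)"
  then obtain f where inj: "inj_on f (verts T')" and fe: "\<forall>e\<in>edges T'. f ` e \<in> edges J"
    unfolding contains_subgraph_def T'_def J_def n_def by blast
  define C where "C = (Inl ` {0..<n} :: (nat + nat) set)"
  define S where "S = {v \<in> verts T'. f v \<in> C}"
  have EV: "\<forall>e\<in>edges T'. e \<subseteq> verts T'" using split_props(4)[OF sg] T'_def by blast
  have Jc: "g \<inter> C \<noteq> {}" if "g \<in> edges J" for g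
  proof -
    have "g \<in> (\<lambda>e. Inl ` e) ` {{i, j} | i j. i < n \<and> j < n \<and> i \<noteq> j} \<or>
          g \<in> {{Inl x, Inr y} | x y. x \<in> {0..<n} \<and> y \<in> {0..<m}}"
      using that unfolding J_def graph_join_def complete_graph_def empty_graph_def edges_def verts_def
      by simp
    then show ?thesis
    proof
      assume "g \<in> (\<lambda>e. Inl ` e) ` {{i, j} | i j. i < n \<and> j < n \<and> i \<noteq> j}"
      then obtain i j where "g = Inl ` {i, j}" "i < n" by blast
      then have "Inl i \<in> g \<inter> C" unfolding C_def by simp
      then show ?thesis by blast
    next
      assume "g \<in> {{Inl x, Inr y} | x y. x \<in> {0..<n} \<and> y \<in> {0..<m}}"
      then obtain x y where "g = {Inl x, Inr y}" "x < n" by auto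
      then have "Inl x \<in> g \<inter> C" unfolding C_def by simp
      then show ?thesis by blast
    qed
  qed
  have cov: "is_vertex_cover T' S"
    unfolding is_vertex_cover_def
  proof (intro conjI ballI)
    show "S \<subseteq> verts T'" unfolding S_def by blast
    fix e assume e: "e \<in> edges T'"
    then have "f ` e \<inter> C \<noteq> {}" using fe Jc by blast
    then obtain v where "v \<in> e" "f v \<in> C" by blast
    then show "e \<inter> S \<noteq> {}" using EV e unfolding S_def by blast
  qed
  have "card S \<le> card C"
  proof (rule card_inj_on_le)
    show "inj_on f S" using inj inj_on_subset unfolding S_def by (metis (no_types, lifting) mem_Collect_eq subsetI)
    show "f ` S \<subseteq> C" unfolding S_def by blast
    show "finite C" unfolding C_def by simp
  qed
  also have "card C = n" unfolding C_def by (simp add: card_image)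
  finally have "covering_number T' \<le> n"
    using cov_le[OF split_props(1)[OF sg] cov[unfolded T'_def]] T'_def by simp
  moreover have "card A \<le> covering_number T'" using split_cov[OF tr cc deg] T'_def by simp
  ultimately show False using cA unfolding n_def by linarith
qed

theorem lemma2p4:
  fixes T :: "'a graph" and A B :: "'a set"
  assumes "tree T"
    and "colour_classes T A B"
    and "card A \<le> card B"
    and "A \<noteq> {}"
    and "\<forall>x\<in>A. degree T x \<ge> 2"
  shows "covering_number T = card A
    \<and> Min (covering_number ` splitting_family T) \<ge> card A
    \<and> (\<forall>m\<ge>1. \<forall>T'\<in>splitting_family T.
           \<not> contains_subgraph (graph_join (complete_graph (card A - 1)) (empty_graph m)) T')"
proof (intro conjI allI impI ballI)
  show "covering_number T = card A" using cov_tree assms by blast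
next
  have sg: "simple_graph T" using assms(1) unfolding tree_def by blast
  have finV: "finite (verts T)" using sg unfolding simple_graph_def by blast
  have fin: "finite (splitting_family T)"
  proof -
    have "splitting_family T = (\<lambda>U. vertex_split U T) ` Pow (verts T)"
      unfolding splitting_family_def by auto
    then show ?thesis using finV by simp
  qed
  have "vertex_split {} T \<in> splitting_family T" unfolding splitting_family_def by blast
  then have ne: "splitting_family T \<noteq> {}" by blast
  show "card A \<le> Min (covering_number ` splitting_family T)"
    using fin ne split_cov[OF assms(1,2,5)] unfolding splitting_family_def by auto
next
  fix m :: nat and T' assume "T' \<in> splitting_family T"
  then obtain U where "T' = vertex_split U T" unfolding splitting_family_def by blast
  then show "\<not> contains_subgraph (graph_join (complete_graph (card A - 1)) (empty_graph m)) T'"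
    using no_embed[OF assms(1,2,5,4)] by blast
qed

end
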